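(* Let $X\in\mathscr X(x,[0,T])$, $Y\in\mathscr X(y,[0,T])$, and let $\tau$ be a stopping time with $\tau\le T$. Then there exists a sequence $(\tau_n)$ of stopping times such that: $\tau\le\tau_n\le T$ for all $n$; on $\{\tau<T\}$ one has $\tau_n\downarrow\tau$ $\mathbb P$-a.s.; and on $\{\tau_n<T\}$ one has $\Delta X_{\tau_n}=\Delta Y_{\tau_n}=0$ $\mathbb P$-a.s.
   Context: Let $(\Omega,(\mathscr F_t)_{t\ge0},\mathscr F,\mathbb P)$ be a filtered probability space with right-continuous filtration and trivial $\mathscr F_0$, and $T>0$, $x,y\in\mathbb{R}$. $\mathscr X(z,[0,T])$ is the set of processes $(Z_t)_{t\ge0-}$ with $Z_{0-}=z$, $(Z_t)_{t\ge0}$ adapted, paths a.s. right-continuous and bounded, with finite and a.s. (uniformly) bounded total variation, and $Z_t=0$ a.s. for all $t\ge T$. $\Delta Z_t=Z_t-Z_{t-}$. *)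

theory Defs
  imports "HOL-Probability.Probability"
begin

definition filtered_prob_space :: "'a measure \<Rightarrow> (real \<Rightarrow> 'a measure) \<Rightarrow> bool" where
  "filtered_prob_space M F \<longleftrightarrow>
     prob_space M \<and>
     (\<forall>t\<ge>0. space (F t) = space M \<and> sets (F t) \<subseteq> sets M) \<and>
     (\<forall>s t. 0 \<le> s \<and> s \<le> t \<longrightarrow> sets (F s) \<subseteq> sets (F t)) \<and>
     (\<forall>t\<ge>0. sets (F t) = (\<Inter>s\<in>{t<..}. sets (F s))) \<and>
     (\<forall>A\<in>sets (F 0). measure M A = 0 \<or> measure M A = 1)"

definition is_stopping_time :: "'a measure \<Rightarrow> (real \<Rightarrow> 'a measure) \<Rightarrow> ('a \<Rightarrow> real) \<Rightarrow> bool" where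
  "is_stopping_time M F \<tau> \<longleftrightarrow>
     (\<forall>\<omega>\<in>space M. 0 \<le> \<tau> \<omega>) \<and> (\<forall>t\<ge>0. {\<omega>\<in>space M. \<tau> \<omega> \<le> t} \<in> sets (F t))"

definition total_variation :: "(real \<Rightarrow> real) \<Rightarrow> ereal" where
  "total_variation f =
     (SUP ts \<in> {ts :: real list. sorted ts}.
        ereal (\<Sum>i<length ts - 1. \<bar>f (ts ! Suc i) - f (ts ! i)\<bar>))"

text \<open>Processes are functions Z :: real \<Rightarrow> 'a \<Rightarrow> real; the value at time 0- is
  encoded by Z t = z for all t < 0, so that Z(0-) = z and the total variation
  over the real line includes the initial jump Z 0 - z.\<close>

definition left_value :: "(real \<Rightarrow> 'a \<Rightarrow> real) \<Rightarrow> real \<Rightarrow> 'a \<Rightarrow> real" where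
  "left_value Z t \<omega> = Lim (at_left t) (\<lambda>s. Z s \<omega>)"

definition jump :: "(real \<Rightarrow> 'a \<Rightarrow> real) \<Rightarrow> real \<Rightarrow> 'a \<Rightarrow> real" where
  "jump Z t \<omega> = Z t \<omega> - left_value Z t \<omega>"

definition admissible :: "'a measure \<Rightarrow> (real \<Rightarrow> 'a measure) \<Rightarrow> real \<Rightarrow> real
    \<Rightarrow> (real \<Rightarrow> 'a \<Rightarrow> real) \<Rightarrow> bool" where
  "admissible M F z T Z \<longleftrightarrow>
     (\<forall>t<0. \<forall>\<omega>\<in>space M. Z t \<omega> = z) \<and>
     (\<forall>t\<ge>0. Z t \<in> borel_measurable (F t)) \<and>
     (AE \<omega> in M. (\<forall>t\<ge>0. continuous (at_right t) (\<lambda>s. Z s \<omega>))) \<and>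
     (AE \<omega> in M. bounded (range (\<lambda>t. Z t \<omega>))) \<and>
     (\<exists>C::real. AE \<omega> in M. total_variation (\<lambda>t. Z t \<omega>) \<le> ereal C) \<and>
     (\<forall>t\<ge>T. AE \<omega> in M. Z t \<omega> = 0)"

end

theory Submission
  imports Defs
begin


definition vs :: "(real\<Rightarrow>real) \<Rightarrow> real list \<Rightarrow> real" where
  "vs f ts = (\<Sum>i<length ts - 1. \<bar>f (ts ! Suc i) - f (ts ! i)\<bar>)"

lemma vs_snoc: "ts \<noteq> [] \<Longrightarrow> vs f (ts @ [x]) = vs f ts + \<bar>f x - f (last ts)\<bar>"
proof -
  assume ne: "ts \<noteq> []"
  then obtain n where n: "length ts = Suc n" by (cases ts) auto
  have "vs f (ts @ [x]) = (\<Sum>i<Suc n. \<bar>f ((ts@[x]) ! Suc i) - f ((ts@[x]) ! i)\<bar>)"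
    unfolding vs_def using n by simp
  also have "\<dots> = (\<Sum>i<n. \<bar>f ((ts@[x]) ! Suc i) - f ((ts@[x]) ! i)\<bar>) + \<bar>f x - f (last ts)\<bar>"
    using n ne by (simp add: nth_append last_conv_nth)
  also have "(\<Sum>i<n. \<bar>f ((ts@[x]) ! Suc i) - f ((ts@[x]) ! i)\<bar>) = vs f ts"
    unfolding vs_def using n by (intro sum.cong) (auto simp: nth_append)
  finally show ?thesis .
qed

lemma vs_single[simp]: "vs f [x] = 0" by (simp add: vs_def)

lemma vs_le_TV: "sorted ts \<Longrightarrow> ereal (vs f ts) \<le> total_variation f"
  unfolding total_variation_def vs_def by (rule SUP_upper2[where i=ts]) auto

lemma vs_append2:
  assumes "ts \<noteq> []"
  shows "vs f (ts @ [u, v]) \<ge> vs f ts + \<bar>f v - f u\<bar>"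
proof -
  have "vs f ((ts @ [u]) @ [v]) = vs f ts + \<bar>f u - f (last ts)\<bar> + \<bar>f v - f u\<bar>"
    using assms vs_snoc[of ts f u] vs_snoc[of "ts @ [u]" f v] by simp
  then show ?thesis by simp
qed

lemma osc_count:
  fixes f :: "real \<Rightarrow> real"
  assumes "finite S"
  shows "(\<forall>t\<in>S. \<forall>d>0. \<exists>s. t - d < s \<and> s < t \<and> e < \<bar>f t - f s\<bar>) \<longrightarrow>
     (\<exists>ts. sorted ts \<and> (S \<noteq> {} \<longrightarrow> ts \<noteq> [] \<and> (\<forall>x\<in>set ts. x \<le> Max S)) \<and> real (card S) * e \<le> vs f ts)"
  using assms
proof (induction S rule: finite_linorder_max_induct)
  case empty
  show ?case by (intro impI exI[of _ "[]"]) (simp add: vs_def)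
next
  case (insert b A)
  show ?case
  proof
    assume H: "\<forall>t\<in>insert b A. \<forall>d>0. \<exists>s. t - d < s \<and> s < t \<and> e < \<bar>f t - f s\<bar>"
    have Mx: "Max (insert b A) = b"
      using insert by (intro Max_eqI) auto
    show "\<exists>ts. sorted ts \<and> (insert b A \<noteq> {} \<longrightarrow> ts \<noteq> [] \<and> (\<forall>x\<in>set ts. x \<le> Max (insert b A))) \<and>
        real (card (insert b A)) * e \<le> vs f ts"
    proof (cases "A = {}")
      case True
      obtain s where s: "s < b" "e < \<bar>f b - f s\<bar>" using H[rule_format, of b 1] by auto
      have "vs f [s, b] = \<bar>f b - f s\<bar>" using vs_snoc[of "[s]" f b] by simp
      then show ?thesis using True s Mx by (intro exI[of _ "[s,b]"]) auto
    next
      case False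
      from insert.IH H obtain ts where ts: "sorted ts" "ts \<noteq> []" "\<forall>x\<in>set ts. x \<le> Max A"
          "real (card A) * e \<le> vs f ts" using False by auto
      have MA: "Max A < b" using insert False by auto
      obtain s where s: "b - (b - Max A) < s" "s < b" "e < \<bar>f b - f s\<bar>"
        using H[rule_format, of b "b - Max A"] MA by auto
      have c: "card (insert b A) = Suc (card A)" using insert by auto
      have "vs f (ts @ [s, b]) \<ge> vs f ts + \<bar>f b - f s\<bar>" using vs_append2[OF ts(2)] .
      then have "real (card (insert b A)) * e \<le> vs f (ts @ [s, b])"
        using ts(4) s c by (simp add: algebra_simps)
      moreover have "sorted (ts @ [s, b])"
        using ts s MA by (auto simp: sorted_append)
      moreover have "\<forall>x\<in>set (ts @ [s,b]). x \<le> Max (insert b A)"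
        using Mx ts s MA by auto
      ultimately show ?thesis by blast
    qed
  qed
qed



lemma TV_left_limit:
  fixes f :: "real \<Rightarrow> real"
  assumes TV: "total_variation f \<le> ereal C"
  shows "\<exists>L. (f \<longlongrightarrow> L) (at_left t)"
proof (rule ccontr)
  assume nl: "\<not> (\<exists>L. (f \<longlongrightarrow> L) (at_left t))"
  have "\<not> cauchy_filter (filtermap f (at_left t))"
  proof
    assume cf: "cauchy_filter (filtermap f (at_left t))"
    have "filtermap f (at_left t) \<noteq> bot" by (simp add: filtermap_bot_iff)
    then obtain c where "filtermap f (at_left t) \<le> nhds c"
      using cauchy_filter_complete_converges[OF cf complete_UNIV] by auto
    then have "(f \<longlongrightarrow> c) (at_left t)" by (simp add: filterlim_def)
    with nl show False by blast
  qed
  then obtain e where e: "e > 0" and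
    E: "\<And>P. eventually P (at_left t) \<Longrightarrow> \<exists>x y. P x \<and> P y \<and> e \<le> dist (f x) (f y)"
    unfolding cauchy_filter_metric_filtermap by (auto simp: not_less)
  have osc: "\<exists>u v. b < u \<and> u \<le> v \<and> v < t \<and> e \<le> \<bar>f v - f u\<bar>" if bt: "b < t" for b
  proof -
    obtain x y where xy: "x \<in> {b<..<t}" "y \<in> {b<..<t}" "e \<le> dist (f x) (f y)"
      using E[OF eventually_at_left_real[OF bt]] by blast
    show ?thesis
    proof (cases "x \<le> y")
      case True then show ?thesis using xy by (intro exI[of _ x] exI[of _ y]) (auto simp: dist_real_def abs_minus_commute)
    next
      case False then show ?thesis using xy by (intro exI[of _ y] exI[of _ x]) (auto simp: dist_real_def)
    qed
  qed
  have "\<exists>ts. sorted ts \<and> ts \<noteq> [] \<and> (\<forall>x\<in>set ts. x < t) \<and> real N * e \<le> vs f ts" for N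
  proof (induction N)
    case 0 show ?case by (intro exI[of _ "[t - 1]"]) auto
  next
    case (Suc N)
    then obtain ts where ts: "sorted ts" "ts \<noteq> []" "\<forall>x\<in>set ts. x < t" "real N * e \<le> vs f ts" by blast
    have "Max (set ts) < t" using ts by simp
    then obtain u v where uv: "Max (set ts) < u" "u \<le> v" "v < t" "e \<le> \<bar>f v - f u\<bar>"
      using osc by blast
    have mx: "\<forall>x\<in>set ts. x \<le> Max (set ts)" by simp
    have "vs f (ts @ [u, v]) \<ge> vs f ts + \<bar>f v - f u\<bar>" using vs_append2[OF ts(2)] .
    moreover have "sorted (ts @ [u,v])" using ts uv mx by (force simp: sorted_append)
    ultimately show ?case using ts uv by (intro exI[of _ "ts @ [u,v]"]) (auto simp: algebra_simps)
  qed
  then have bnd: "real N * e \<le> C" for N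
    using vs_le_TV[of _ f] TV by (meson ereal_less_eq(3) order_trans)
  obtain N where "C / e < real N" using reals_Archimedean2 by blast
  then have "C < real N * e" using e by (simp add: field_simps)
  with bnd[of N] show False by simp
qed



definition oscset :: "'a measure \<Rightarrow> (real \<Rightarrow> 'a \<Rightarrow> real) \<Rightarrow> real \<Rightarrow> real \<Rightarrow> 'a set" where
  "oscset M Z t e = {\<omega>\<in>space M. \<exists>m. \<forall>k\<ge>m. e < \<bar>Z t \<omega> - Z (t - 1 / real (Suc k)) \<omega>\<bar>}"

lemma oscset_sets:
  assumes meas: "\<And>s. Z s \<in> borel_measurable M"
  shows "oscset M Z t e \<in> sets M"
proof -
  have "oscset M Z t e = (\<Union>m. \<Inter>k\<in>{m..}. {\<omega>\<in>space M. e < \<bar>Z t \<omega> - Z (t - 1 / real (Suc k)) \<omega>\<bar>})"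
    unfolding oscset_def by auto
  also have "\<dots> \<in> sets M"
    using meas by measurable
  finally show ?thesis .
qed

lemma oscset_osc:
  assumes "\<omega> \<in> oscset M Z t e" "d > 0"
  shows "\<exists>s. t - d < s \<and> s < t \<and> e < \<bar>Z t \<omega> - Z s \<omega>\<bar>"
proof -
  obtain m where m: "\<forall>k\<ge>m. e < \<bar>Z t \<omega> - Z (t - 1 / real (Suc k)) \<omega>\<bar>"
    using assms unfolding oscset_def by auto
  obtain n :: nat where n: "1 / d < real n" using reals_Archimedean2 by blast
  define k where "k = max m n"
  have "real n \<le> real k" by (simp add: k_def)
  then have "1 / d < real (Suc k)" using n by simp
  then have "1 / real (Suc k) < d" using assms(2)
    by (simp add: field_simps)
  moreover have "e < \<bar>Z t \<omega> - Z (t - 1 / real (Suc k)) \<omega>\<bar>" using m by (simp add: k_def)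
  ultimately show ?thesis by (intro exI[of _ "t - 1 / real (Suc k)"]) auto
qed

lemma finite_if_card_bounded:
  assumes "\<And>S. finite S \<Longrightarrow> S \<subseteq> X \<Longrightarrow> real (card S) \<le> K"
  shows "finite X"
proof (rule ccontr)
  assume "infinite X"
  obtain n :: nat where n: "K < real n" using reals_Archimedean2 by blast
  obtain S where "finite S" "card S = n" "S \<subseteq> X"
    using infinite_arbitrarily_large[OF \<open>infinite X\<close>] by blast
  with assms[of S] n show False by simp
qed

lemma oscset_finite:
  assumes P: "prob_space M"
  and meas: "\<And>s. Z s \<in> borel_measurable M"
  and TV: "AE \<omega> in M. total_variation (\<lambda>t. Z t \<omega>) \<le> ereal C"
  and e: "e > 0" and d: "d > 0"
  shows "finite {t. d < measure M (oscset M Z t e)}"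
proof (rule finite_if_card_bounded[where K = "C / e / d"])
  fix S assume S: "finite S" "S \<subseteq> {t. d < measure M (oscset M Z t e)}"
  interpret prob_space M by (rule P)
  have A: "oscset M Z t e \<in> sets M" for t using oscset_sets[OF meas] .
  have cnt: "(\<Sum>t\<in>S. indicator (oscset M Z t e) \<omega>) = real (card {t\<in>S. \<omega> \<in> oscset M Z t e})" for \<omega>
    using S(1) by (simp add: indicator_def sum.If_cases Int_def conj_commute)
  have ae: "AE \<omega> in M. (\<Sum>t\<in>S. indicator (oscset M Z t e) \<omega>) \<le> C / e"
    using TV
  proof eventually_elim
    case (elim \<omega>)
    let ?S = "{t\<in>S. \<omega> \<in> oscset M Z t e}"
    have fS: "finite ?S" using S by auto
    have H: "\<forall>t\<in>?S. \<forall>d>0. \<exists>s. t - d < s \<and> s < t \<and> e < \<bar>Z t \<omega> - Z s \<omega>\<bar>"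
      using oscset_osc[of \<omega> M Z] by auto
    obtain ts where ts: "sorted ts" "real (card ?S) * e \<le> vs (\<lambda>t. Z t \<omega>) ts"
      using osc_count[where S="?S" and f="\<lambda>t. Z t \<omega>" and e=e] fS H by blast
    have "ereal (real (card ?S) * e) \<le> ereal C"
      using ts vs_le_TV[OF ts(1), of "\<lambda>t. Z t \<omega>"] elim by (meson ereal_less_eq(3) order_trans)
    then have "real (card ?S) * e \<le> C" by simp
    then show ?case using cnt e by (simp add: field_simps)
  qed
  have int: "integrable M (\<lambda>\<omega>. \<Sum>t\<in>S. indicator (oscset M Z t e) \<omega> :: real)"
    by (rule Bochner_Integration.integrable_sum, rule integrable_real_indicator) (auto simp: A emeasure_eq_measure)
  have "(\<Sum>t\<in>S. measure M (oscset M Z t e)) = (\<integral>\<omega>. (\<Sum>t\<in>S. indicator (oscset M Z t e) \<omega>) \<partial>M)"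
    by (subst Bochner_Integration.integral_sum)
       (auto simp: A emeasure_eq_measure intro!: integrable_real_indicator)
  also have "\<dots> \<le> (\<integral>\<omega>. C / e \<partial>M)"
    using int ae by (intro integral_mono_AE) auto
  also have "\<dots> = C / e" by (simp add: prob_space)
  finally have le: "(\<Sum>t\<in>S. measure M (oscset M Z t e)) \<le> C / e" .
  have "real (card S) * d = (\<Sum>t\<in>S. d)" by simp
  also have "\<dots> \<le> (\<Sum>t\<in>S. measure M (oscset M Z t e))"
    using S by (intro sum_mono) auto
  finally have "real (card S) * d \<le> C / e" using le by linarith
  then show "real (card S) \<le> C / e / d" using d by (metis pos_le_divide_eq)
qed



lemma seq_at_left: "filterlim (\<lambda>k. t - 1 / real (Suc k)) (at_left t) sequentially"
proof (rule tendsto_imp_filterlim_at_left)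
  show "(\<lambda>k. t - 1 / real (Suc k)) \<longlonglongrightarrow> t"
    using tendsto_diff[OF tendsto_const[of t] LIMSEQ_inverse_real_of_nat]
    by (simp add: divide_inverse)
  show "\<forall>\<^sub>F k in sequentially. t - 1 / real (Suc k) < t" by simp
qed

lemma aux_ineq: "a \<le> b + c \<Longrightarrow> i = i' \<Longrightarrow> i' < a / 2 \<Longrightarrow> c < a / 2 \<Longrightarrow> i < (b::real)" by linarith

lemma jump_countable:
  assumes P: "prob_space M"
  and meas: "\<And>s. Z s \<in> borel_measurable M"
  and TV: "AE \<omega> in M. total_variation (\<lambda>t. Z t \<omega>) \<le> ereal C"
  shows "countable {t. \<not> (AE \<omega> in M. jump Z t \<omega> = 0)}"
proof -
  interpret prob_space M by (rule P)
  have LL: "AE \<omega> in M. \<forall>t. \<exists>L. ((\<lambda>s. Z s \<omega>) \<longlongrightarrow> L) (at_left t)"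
    using TV by eventually_elim (use TV_left_limit in blast)
  have good: "AE \<omega> in M. jump Z t \<omega> = 0"
    if H: "\<forall>j::nat. measure M (oscset M Z t (1 / real (Suc j))) = 0" for t
  proof -
    have "AE \<omega> in M. \<forall>j::nat. \<omega> \<notin> oscset M Z t (1 / real (Suc j))"
    proof (subst AE_all_countable, intro allI AE_not_in)
      fix j :: nat
      show "oscset M Z t (1 / real (Suc j)) \<in> null_sets M"
        using H oscset_sets[where Z=Z and M=M, OF meas, of t "1 / real (Suc j)"]
        by (simp add: emeasure_eq_measure null_sets_def)
    qed
    then show ?thesis using LL AE_space
    proof eventually_elim
      case (elim \<omega>)
      obtain L where L: "((\<lambda>s. Z s \<omega>) \<longlongrightarrow> L) (at_left t)" using elim by blast
      have lv: "left_value Z t \<omega> = L"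
        unfolding left_value_def using L by (intro tendsto_Lim) auto
      show ?case
      proof (rule ccontr)
        assume "jump Z t \<omega> \<noteq> 0"
        then have a: "0 < \<bar>Z t \<omega> - L\<bar> / 2" using lv by (simp add: jump_def)
        obtain j where j: "inverse (real (Suc j)) < \<bar>Z t \<omega> - L\<bar> / 2"
          using reals_Archimedean[OF a] by auto
        have seq: "(\<lambda>k. Z (t - 1 / real (Suc k)) \<omega>) \<longlonglongrightarrow> L"
          using filterlim_compose[OF L seq_at_left] by (simp add: o_def)
        then have "eventually (\<lambda>k. dist (Z (t - 1 / real (Suc k)) \<omega>) L < \<bar>Z t \<omega> - L\<bar> / 2) sequentially"
          using a by (rule tendstoD)
        then obtain m where m: "\<forall>k\<ge>m. \<bar>Z (t - 1 / real (Suc k)) \<omega> - L\<bar> < \<bar>Z t \<omega> - L\<bar> / 2"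
          by (auto simp: eventually_sequentially dist_real_def)
        have "\<forall>k\<ge>m. 1 / real (Suc j) < \<bar>Z t \<omega> - Z (t - 1 / real (Suc k)) \<omega>\<bar>"
        proof (intro allI impI)
          fix k assume "m \<le> k"
          with m have "\<bar>Z (t - 1 / real (Suc k)) \<omega> - L\<bar> < \<bar>Z t \<omega> - L\<bar> / 2" by blast
          then show "1 / real (Suc j) < \<bar>Z t \<omega> - Z (t - 1 / real (Suc k)) \<omega>\<bar>"
          proof -
            have tri: "\<bar>Z t \<omega> - L\<bar> \<le> \<bar>Z t \<omega> - Z s \<omega>\<bar> + \<bar>Z s \<omega> - L\<bar>" for s
              using abs_triangle_ineq[of "Z t \<omega> - Z s \<omega>" "Z s \<omega> - L"] by simp
            have iv: "1 / real (Suc j) = inverse (real (Suc j))" by (simp add: divide_inverse)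
            show ?thesis using tri[of "t - 1 / real (Suc k)"] iv j \<open>\<bar>Z (t - 1 / real (Suc k)) \<omega> - L\<bar> < \<bar>Z t \<omega> - L\<bar> / 2\<close>
              using aux_ineq by metis
          qed
        qed
        then have "\<omega> \<in> oscset M Z t (1 / real (Suc j))"
          using elim unfolding oscset_def by blast
        with elim show False by blast
      qed
    qed
  qed
  have sub: "{t. \<not> (AE \<omega> in M. jump Z t \<omega> = 0)} \<subseteq>
      (\<Union>j::nat. \<Union>i::nat. {t. 1 / real (Suc i) < measure M (oscset M Z t (1 / real (Suc j)))})"
  proof
    fix t assume "t \<in> {t. \<not> (AE \<omega> in M. jump Z t \<omega> = 0)}"
    then have nAE: "\<not> (AE \<omega> in M. jump Z t \<omega> = 0)" by simp
    have "\<not> (\<forall>j::nat. measure M (oscset M Z t (1 / real (Suc j))) = 0)"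
      using good[of t] nAE by blast
    then obtain j :: nat where ne: "measure M (oscset M Z t (1 / real (Suc j))) \<noteq> 0"
      by blast
    have pos: "0 < measure M (oscset M Z t (1 / real (Suc j)))"
      using order_le_neq_trans[OF measure_nonneg ne[symmetric]] .
    then obtain i where "inverse (real (Suc i)) < measure M (oscset M Z t (1 / real (Suc j)))"
      using reals_Archimedean by blast
    then show "t \<in> (\<Union>j::nat. \<Union>i::nat. {t. 1 / real (Suc i) < measure M (oscset M Z t (1 / real (Suc j)))})"
      by (auto simp: divide_inverse)
  qed
  have fin: "finite {t. 1 / real (Suc i) < measure M (oscset M Z t (1 / real (Suc j)))}" for i j
    by (rule oscset_finite[OF P meas TV]) auto
  show ?thesis
    by (rule countable_subset[OF sub], rule countable_UN, simp, rule countable_UN, simp, rule countable_finite[OF fin])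
qed



lemma fps_prob: "filtered_prob_space M F \<Longrightarrow> prob_space M"
  unfolding filtered_prob_space_def by (elim conjE)

lemma fps_sub: assumes "filtered_prob_space M F" "0 \<le> t"
  shows "space (F t) = space M \<and> sets (F t) \<subseteq> sets M"
  using assms(1)[unfolded filtered_prob_space_def, THEN conjunct2, THEN conjunct1, rule_format, OF assms(2)] .

lemma fps_mono: assumes "filtered_prob_space M F" "0 \<le> s" "s \<le> t"
  shows "sets (F s) \<subseteq> sets (F t)"
  using assms(1)[unfolded filtered_prob_space_def, THEN conjunct2, THEN conjunct2, THEN conjunct1, rule_format, OF conjI[OF assms(2,3)]] .

lemma adm_const: assumes "admissible M F z T Z" "t < 0" "\<omega> \<in> space M" shows "Z t \<omega> = z"
  using assms(1)[unfolded admissible_def, THEN conjunct1, rule_format, OF assms(2,3)] .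

lemma adm_meas: assumes "admissible M F z T Z" "0 \<le> t" shows "Z t \<in> borel_measurable (F t)"
  using assms(1)[unfolded admissible_def, THEN conjunct2, THEN conjunct1, rule_format, OF assms(2)] .

lemma adm_TV: assumes "admissible M F z T Z" shows "\<exists>C::real. AE \<omega> in M. total_variation (\<lambda>t. Z t \<omega>) \<le> ereal C"
  using assms(1)[unfolded admissible_def, THEN conjunct2, THEN conjunct2, THEN conjunct2, THEN conjunct2, THEN conjunct1] .

lemma st_nonneg: assumes "is_stopping_time M F \<tau>" "\<omega> \<in> space M" shows "0 \<le> \<tau> \<omega>"
  using assms(1)[unfolded is_stopping_time_def, THEN conjunct1, rule_format, OF assms(2)] .

lemma st_sets: assumes "is_stopping_time M F \<tau>" "0 \<le> t" shows "{\<omega>\<in>space M. \<tau> \<omega> \<le> t} \<in> sets (F t)"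
  using assms(1)[unfolded is_stopping_time_def, THEN conjunct2, rule_format, OF assms(2)] .

lemma admissible_meas:
  assumes FP: "filtered_prob_space M F" and Z: "admissible M F z T Z"
  shows "Z s \<in> borel_measurable M"
proof (cases "s \<ge> 0")
  case True
  have "subalgebra M (F s)" using fps_sub[OF FP True] unfolding subalgebra_def by blast
  moreover have "Z s \<in> borel_measurable (F s)" using adm_meas[OF Z True] .
  ultimately show ?thesis by (rule measurable_from_subalg)
next
  case False
  have "(\<lambda>\<omega>. z) \<in> borel_measurable M" by simp
  moreover have "\<omega> \<in> space M \<Longrightarrow> Z s \<omega> = z" for \<omega> using adm_const[OF Z, of s \<omega>] False by simp
  ultimately show ?thesis using measurable_cong[where g="\<lambda>\<omega>. z" and f="Z s" and M=M and M'=borel] by simp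
qed

lemma admissible_countable:
  assumes FP: "filtered_prob_space M F" and Z: "admissible M F z T Z"
  shows "countable {t. \<not> (AE \<omega> in M. jump Z t \<omega> = 0)}"
proof -
  obtain C where C: "AE \<omega> in M. total_variation (\<lambda>t. Z t \<omega>) \<le> ereal C"
    using adm_TV[OF Z] by blast
  have P: "prob_space M" using fps_prob[OF FP] .
  show ?thesis by (rule jump_countable[OF P admissible_meas[OF FP Z] C])
qed

lemma int_aux: "(a::int) < 2 * b + 2 \<Longrightarrow> a + 1 \<le> 2 * (b + 1)" by presburger

definition gr :: "real \<Rightarrow> nat \<Rightarrow> real \<Rightarrow> real" where
  "gr c n r = c + (of_int \<lfloor>(r - c) * 2 ^ n\<rfloor> + 1) / 2 ^ n"

lemma gr_gt: "r < gr c n r"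
proof -
  have "(r - c) * 2 ^ n < of_int \<lfloor>(r - c) * 2 ^ n\<rfloor> + 1" by linarith
  then have "r - c < (of_int \<lfloor>(r - c) * 2 ^ n\<rfloor> + 1) / 2 ^ n" by (simp add: field_simps)
  then show ?thesis unfolding gr_def by simp
qed

lemma gr_le: "gr c n r \<le> r + 1 / 2 ^ n"
proof -
  have "of_int \<lfloor>(r - c) * 2 ^ n\<rfloor> \<le> (r - c) * 2 ^ n" by simp
  then have "of_int \<lfloor>(r - c) * 2 ^ n\<rfloor> / 2 ^ n \<le> r - c" by (simp add: pos_divide_le_eq)
  then have "(of_int \<lfloor>(r - c) * 2 ^ n\<rfloor> + 1) / 2 ^ n \<le> r - c + 1 / 2 ^ n" by (simp add: add_divide_distrib)
  then show ?thesis unfolding gr_def by simp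
qed

lemma gr_mono: "gr c (Suc n) r \<le> gr c n r"
proof -
  define x where "x = (r - c) * 2 ^ n"
  have x2: "(r - c) * 2 ^ Suc n = 2 * x" by (simp add: x_def)
  have "2 * x < 2 * of_int \<lfloor>x\<rfloor> + 2" by linarith
  then have "\<lfloor>2 * x\<rfloor> < 2 * \<lfloor>x\<rfloor> + 2" by (simp add: floor_less_iff)
  then have "\<lfloor>2 * x\<rfloor> + 1 \<le> 2 * (\<lfloor>x\<rfloor> + 1)" using int_aux by blast
  then have "real_of_int (\<lfloor>2 * x\<rfloor> + 1) \<le> 2 * real_of_int (\<lfloor>x\<rfloor> + 1)" by linarith
  then have "(of_int \<lfloor>2 * x\<rfloor> + 1) / (2 * 2 ^ n) \<le> (2 * (of_int \<lfloor>x\<rfloor> + 1)) / (2 * (2::real) ^ n)"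
    by (intro divide_right_mono) simp_all
  moreover have "(2 * (of_int \<lfloor>x\<rfloor> + 1)) / (2 * (2::real) ^ n) = (of_int \<lfloor>x\<rfloor> + 1) / 2 ^ n"
    by (rule mult_divide_mult_cancel_left) simp
  ultimately have "(of_int \<lfloor>2 * x\<rfloor> + 1) / 2 ^ Suc n \<le> (of_int \<lfloor>x\<rfloor> + 1) / (2::real) ^ n"
    by simp
  then show ?thesis unfolding gr_def x2 x_def[symmetric] by simp
qed

lemma gr_le_iff: "gr c n r \<le> t \<longleftrightarrow> r < c + of_int \<lfloor>(t - c) * 2 ^ n\<rfloor> / 2 ^ n"
proof -
  have "gr c n r \<le> t \<longleftrightarrow> of_int \<lfloor>(r - c) * 2 ^ n\<rfloor> + 1 \<le> (t - c) * 2 ^ n"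
    unfolding gr_def by (simp add: field_simps)
  also have "\<dots> \<longleftrightarrow> \<lfloor>(r - c) * 2 ^ n\<rfloor> + 1 \<le> \<lfloor>(t - c) * 2 ^ n\<rfloor>"
    by (metis le_floor_iff of_int_1 of_int_add)
  also have "\<dots> \<longleftrightarrow> \<lfloor>(r - c) * 2 ^ n\<rfloor> < \<lfloor>(t - c) * 2 ^ n\<rfloor>" by linarith
  also have "\<dots> \<longleftrightarrow> (r - c) * 2 ^ n < of_int \<lfloor>(t - c) * 2 ^ n\<rfloor>" by (simp add: floor_less_iff)
  also have "\<dots> \<longleftrightarrow> r < c + of_int \<lfloor>(t - c) * 2 ^ n\<rfloor> / 2 ^ n" by (simp add: field_simps)
  finally show ?thesis .
qed

lemma gr_thr_le: "c + of_int \<lfloor>(t - c) * 2 ^ n\<rfloor> / 2 ^ n \<le> (t::real)"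
proof -
  have "of_int \<lfloor>(t - c) * 2 ^ n\<rfloor> \<le> (t - c) * 2 ^ n" by simp
  then have "of_int \<lfloor>(t - c) * 2 ^ n\<rfloor> / 2 ^ n \<le> t - c" by (simp add: pos_divide_le_eq)
  then show ?thesis by simp
qed

lemma stopping_less:
  assumes FP: "filtered_prob_space M F" and st: "is_stopping_time M F \<tau>"
    and "p \<le> t" "0 \<le> t"
  shows "{\<omega>\<in>space M. \<tau> \<omega> < p} \<in> sets (F t)"
proof -
  have eq: "{\<omega>\<in>space M. \<tau> \<omega> < p} = (\<Union>k::nat. {\<omega>\<in>space M. \<tau> \<omega> \<le> p - 1 / real (Suc k)})"
  proof safe
    fix \<omega> assume "\<omega> \<in> space M" "\<tau> \<omega> < p"
    then obtain k where "inverse (real (Suc k)) < p - \<tau> \<omega>"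
      using reals_Archimedean[of "p - \<tau> \<omega>"] by auto
    then show "\<omega> \<in> (\<Union>k::nat. {\<omega>\<in>space M. \<tau> \<omega> \<le> p - 1 / real (Suc k)})"
      using \<open>\<omega> \<in> space M\<close> by (auto simp: divide_inverse intro!: exI[of _ k])
  next
    fix \<omega> k assume "\<tau> \<omega> \<le> p - 1 / real (Suc k)"
    moreover have "0 < 1 / real (Suc k)" by simp
    ultimately show "\<tau> \<omega> < p" by linarith
  qed
  have piece: "{\<omega>\<in>space M. \<tau> \<omega> \<le> p - 1 / real (Suc k)} \<in> sets (F t)" for k
  proof (cases "0 \<le> p - 1 / real (Suc k)")
    case True
    have "{\<omega>\<in>space M. \<tau> \<omega> \<le> p - 1 / real (Suc k)} \<in> sets (F (p - 1 / real (Suc k)))"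
      using st_sets[OF st True] .
    moreover have "p - 1 / real (Suc k) \<le> t"
    proof -
      have "0 \<le> 1 / real (Suc k)" by simp
      then show ?thesis using assms(3) by linarith
    qed
    ultimately show ?thesis using fps_mono[OF FP True] by blast
  next
    case False
    have nn: "\<forall>\<omega>\<in>space M. 0 \<le> \<tau> \<omega>" using st_nonneg[OF st] by blast
    have "{\<omega>\<in>space M. \<tau> \<omega> \<le> p - 1 / real (Suc k)} = {}"
    proof safe
      fix \<omega> assume "\<omega> \<in> space M" "\<tau> \<omega> \<le> p - 1 / real (Suc k)"
      with nn False show "\<omega> \<in> {}" by fastforce
    qed
    then show ?thesis by (metis sets.empty_sets)
  qed
  have "range (\<lambda>k::nat. {\<omega>\<in>space M. \<tau> \<omega> \<le> p - 1 / real (Suc k)}) \<subseteq> sets (F t)"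
    using piece by blast
  then show ?thesis unfolding eq by (rule sets.countable_UN)
qed



theorem lemmaB1:
  fixes M :: "'a measure" and F :: "real \<Rightarrow> 'a measure"
    and T x y :: real and X Y :: "real \<Rightarrow> 'a \<Rightarrow> real" and \<tau> :: "'a \<Rightarrow> real"
  assumes "filtered_prob_space M F"
    and "T > 0"
    and "admissible M F x T X"
    and "admissible M F y T Y"
    and "is_stopping_time M F \<tau>"
    and "\<forall>\<omega>\<in>space M. \<tau> \<omega> \<le> T"
  shows "\<exists>\<tau>n :: nat \<Rightarrow> 'a \<Rightarrow> real.
           (\<forall>n. is_stopping_time M F (\<tau>n n)) \<and>
           (\<forall>n. \<forall>\<omega>\<in>space M. \<tau> \<omega> \<le> \<tau>n n \<omega> \<and> \<tau>n n \<omega> \<le> T) \<and>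
           (AE \<omega> in M. \<tau> \<omega> < T \<longrightarrow>
              decseq (\<lambda>n. \<tau>n n \<omega>) \<and> (\<lambda>n. \<tau>n n \<omega>) \<longlonglongrightarrow> \<tau> \<omega>) \<and>
           (\<forall>n. AE \<omega> in M. \<tau>n n \<omega> < T \<longrightarrow>
              jump X (\<tau>n n \<omega>) \<omega> = 0 \<and> jump Y (\<tau>n n \<omega>) \<omega> = 0)"
proof -
  note FP = assms(1)
  have P: "prob_space M" using fps_prob[OF FP] .
  define B where "B = {t. \<not> (AE \<omega> in M. jump X t \<omega> = 0)} \<union> {t. \<not> (AE \<omega> in M. jump Y t \<omega> = 0)}"
  have cB: "countable B"
    unfolding B_def using admissible_countable[OF FP assms(3)] admissible_countable[OF FP assms(4)]
    by (rule countable_Un)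
  define Bad where "Bad = (\<lambda>(b, k, n). b - of_int k / 2 ^ n) ` (B \<times> (UNIV::int set) \<times> (UNIV::nat set))"
  have "countable (B \<times> (UNIV::int set) \<times> (UNIV::nat set))"
    using cB by (intro countable_SIGMA) auto
  then have cBad: "countable Bad" unfolding Bad_def by (rule countable_image)
  have "Bad \<noteq> UNIV" using uncountable_UNIV_real cBad by auto
  then obtain c where c: "c \<notin> Bad" by auto
  define G where "G = (\<lambda>(k::int, n::nat). c + of_int k / 2 ^ n) ` UNIV"
  have cG: "countable G" unfolding G_def by simp
  have Ggood: "(AE \<omega> in M. jump X t \<omega> = 0 \<and> jump Y t \<omega> = 0)" if "t \<in> G" for t
  proof -
    obtain k :: int and n :: nat where t: "t = c + of_int k / 2 ^ n"
      using \<open>t \<in> G\<close> unfolding G_def by auto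
    have "t \<notin> B"
    proof
      assume "t \<in> B"
      then have "t - of_int k / 2 ^ n \<in> Bad"
        unfolding Bad_def by (intro rev_image_eqI[of "(t, k, n)"]) auto
      with c t show False by simp
    qed
    then have "AE \<omega> in M. jump X t \<omega> = 0" "AE \<omega> in M. jump Y t \<omega> = 0"
      unfolding B_def by auto
    then show ?thesis by (rule AE_conjI)
  qed
  have AEG: "AE \<omega> in M. \<forall>t\<in>G. jump X t \<omega> = 0 \<and> jump Y t \<omega> = 0"
    by (subst AE_ball_countable[OF cG]) (use Ggood in blast)
  have grG: "gr c n r \<in> G" for n r
    unfolding G_def gr_def
    by (rule rev_image_eqI[of "(\<lfloor>(r - c) * 2 ^ n\<rfloor> + 1, n)"]) auto
  define \<tau>n where "\<tau>n n \<omega> = min T (gr c n (\<tau> \<omega>))" for n \<omega>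
  have nn: "\<omega> \<in> space M \<Longrightarrow> 0 \<le> \<tau> \<omega>" for \<omega> using st_nonneg[OF assms(5)] .
  show ?thesis
  proof (intro exI[of _ \<tau>n] conjI allI)
    fix n
    show "is_stopping_time M F (\<tau>n n)"
      unfolding is_stopping_time_def
    proof (intro conjI ballI allI impI)
      fix \<omega> assume "\<omega> \<in> space M"
      then show "0 \<le> \<tau>n n \<omega>"
        using nn[of \<omega>] gr_gt[of "\<tau> \<omega>" c n] assms(2) unfolding \<tau>n_def by linarith
    next
      fix t :: real assume t: "0 \<le> t"
      show "{\<omega> \<in> space M. \<tau>n n \<omega> \<le> t} \<in> sets (F t)"
      proof (cases "T \<le> t")
        case True
        then have "{\<omega> \<in> space M. \<tau>n n \<omega> \<le> t} = space (F t)"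
          using fps_sub[OF FP t] True unfolding \<tau>n_def by (simp add: min_le_iff_disj)
        then show ?thesis by simp
      next
        case False
        let ?p = "c + of_int \<lfloor>(t - c) * 2 ^ n\<rfloor> / 2 ^ n"
        have "{\<omega> \<in> space M. \<tau>n n \<omega> \<le> t} = {\<omega> \<in> space M. \<tau> \<omega> < ?p}"
          using False unfolding \<tau>n_def by (simp add: gr_le_iff min_le_iff_disj)
        then show ?thesis using stopping_less[OF FP assms(5) gr_thr_le t] by simp
      qed
    qed
  next
    fix n
    show "\<forall>\<omega>\<in>space M. \<tau> \<omega> \<le> \<tau>n n \<omega> \<and> \<tau>n n \<omega> \<le> T"
    proof
      fix \<omega> assume "\<omega> \<in> space M"
      then have "\<tau> \<omega> \<le> T" using assms(6) by blast
      moreover have "\<tau> \<omega> < gr c n (\<tau> \<omega>)" by (rule gr_gt)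
      ultimately show "\<tau> \<omega> \<le> \<tau>n n \<omega> \<and> \<tau>n n \<omega> \<le> T" unfolding \<tau>n_def by simp
    qed
  next
    show "AE \<omega> in M. \<tau> \<omega> < T \<longrightarrow> decseq (\<lambda>n. \<tau>n n \<omega>) \<and> (\<lambda>n. \<tau>n n \<omega>) \<longlonglongrightarrow> \<tau> \<omega>"
    proof (rule AE_I2, intro impI conjI)
      fix \<omega> assume "\<omega> \<in> space M" "\<tau> \<omega> < T"
      show "decseq (\<lambda>n. \<tau>n n \<omega>)"
        unfolding decseq_Suc_iff \<tau>n_def
      proof
        fix n show "min T (gr c (Suc n) (\<tau> \<omega>)) \<le> min T (gr c n (\<tau> \<omega>))"
          using gr_mono[of c n "\<tau> \<omega>"] by (rule min.mono[OF order_refl])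
      qed
      have lo: "\<tau> \<omega> \<le> \<tau>n n \<omega>" for n
        using \<open>\<tau> \<omega> < T\<close> gr_gt[of "\<tau> \<omega>" c n] unfolding \<tau>n_def by simp
      have hi: "\<tau>n n \<omega> \<le> \<tau> \<omega> + (1/2) ^ n" for n
        using gr_le[of c n "\<tau> \<omega>"] unfolding \<tau>n_def by (simp add: power_one_over)
      have z: "(\<lambda>n. (1/2::real) ^ n) \<longlonglongrightarrow> 0" by (rule LIMSEQ_realpow_zero) simp_all
      have "(\<lambda>n. \<tau> \<omega> + (1/2::real) ^ n) \<longlonglongrightarrow> \<tau> \<omega> + 0"
        by (rule tendsto_add[OF tendsto_const z])
      then have lim: "(\<lambda>n. \<tau> \<omega> + (1/2::real) ^ n) \<longlonglongrightarrow> \<tau> \<omega>" by simp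
      have e1: "\<forall>\<^sub>F n in sequentially. \<tau> \<omega> \<le> \<tau>n n \<omega>" by (intro always_eventually allI lo)
      have e2: "\<forall>\<^sub>F n in sequentially. \<tau>n n \<omega> \<le> \<tau> \<omega> + (1/2) ^ n" by (intro always_eventually allI hi)
      show "(\<lambda>n. \<tau>n n \<omega>) \<longlonglongrightarrow> \<tau> \<omega>"
        by (rule tendsto_sandwich[OF e1 e2 tendsto_const lim])
    qed
  next
    fix n
    show "AE \<omega> in M. \<tau>n n \<omega> < T \<longrightarrow> jump X (\<tau>n n \<omega>) \<omega> = 0 \<and> jump Y (\<tau>n n \<omega>) \<omega> = 0"
      using AEG
    proof eventually_elim
      case (elim \<omega>)
      show ?case
      proof
        assume "\<tau>n n \<omega> < T"
        then have "\<tau>n n \<omega> = gr c n (\<tau> \<omega>)" unfolding \<tau>n_def by simp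
        then have "\<tau>n n \<omega> \<in> G" using grG by simp
        then show "jump X (\<tau>n n \<omega>) \<omega> = 0 \<and> jump Y (\<tau>n n \<omega>) \<omega> = 0" using elim by blast
      qed
    qed
  qed
qed


end
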